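(* Let $I_{100}=(a_0a_1a_2a_3a_4)^{18}\det\big(a_i^{\,j}\big)_{0\le i,j\le 4}\in\mathbb{C}[a_0,\dots,a_4]$ and let $\Gamma\subset\mathbb{P}^4$ be the singular locus of the hypersurface $E=V(I_{100})$, i.e. the common zero locus of $I_{100}$ and all its partial derivatives. Then $\Gamma$ has exactly $30$ irreducible components, all linear subspaces: (i) the $5$ coordinate hyperplanes $V(a_i)$, $i=0,\dots,4$; (ii) the $15$ planes $V(a_i-a_j,\ a_k-a_l)\cong\mathbb{P}^2$, one for each partition of a $4$-element subset of $\{0,\dots,4\}$ into two pairs $\{i,j\},\{k,l\}$; (iii) the $10$ planes $V(a_i-a_j,\ a_k-a_j)\cong\mathbb{P}^2$, one for each $3$-element subset $\{i,j,k\}$ of $\{0,\dots,4\}$. Furthermore, under $\Phi$ each hyperplane $V(a_i)$ is contracted to the point $Q=(1:0:0:0:0)$, all planes of type (ii) are mapped onto the same surface $S_1$, and all planes of type (iii) onto the same surface $S_2$.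
   Context: $\mathbb{P}^4$ has coordinates $(a_0:\dots:a_4)$, a point being regarded as the cubic surface in Sylvester form $\sum_{i=0}^4 a_iz_i^3=0$, $\sum_{i=0}^4 z_i=0$. $\det(a_i^{\,j})$ is the Vandermonde determinant, equal up to sign to $\prod_{i<j}(a_j-a_i)$. With $\sigma_i$ the elementary symmetric polynomials in $a_0,\dots,a_4$, $\Phi:\mathbb{P}^4\dashrightarrow\mathbb{P}(1,2,3,4,5)$ is $(a_0:\dots:a_4)\mapsto(\sigma_4^2-4\sigma_3\sigma_5:\ \sigma_1\sigma_5^3:\ \sigma_4\sigma_5^4:\ \sigma_2\sigma_5^6:\ \sigma_5^8)$. $S_1$ (resp. $S_2$) denotes the closure of the image under $\Phi$ of the Sylvester forms with coefficients $(a,b,b,c,c)$ (resp. $(a,b,b,b,c)$), $(a:b:c)\in\mathbb{P}^2$. *)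

theory Defs
  imports "HOL-Analysis.Analysis"
begin

text \<open>Points of the affine cone C^5 over P^4, coordinates indexed by the numeral type 5
  (elements 0,1,2,3,4).  idx converts an index to the natural number 0..4.\<close>

type_synonym pt = "complex ^ 5"

definition idx :: "5 \<Rightarrow> nat" where
  "idx i = nat (Rep_bit1 i)"

inductive_set polyfun :: "(pt \<Rightarrow> complex) set" where
  pf_const: "(\<lambda>_. c) \<in> polyfun"
| pf_coord: "(\<lambda>x. x $ i) \<in> polyfun"
| pf_add: "f \<in> polyfun \<Longrightarrow> g \<in> polyfun \<Longrightarrow> (\<lambda>x. f x + g x) \<in> polyfun"
| pf_mult: "f \<in> polyfun \<Longrightarrow> g \<in> polyfun \<Longrightarrow> (\<lambda>x. f x * g x) \<in> polyfun"

definition zariski_closed :: "pt set \<Rightarrow> bool" where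
  "zariski_closed S \<longleftrightarrow> (\<exists>F \<subseteq> polyfun. S = {x. \<forall>f\<in>F. f x = 0})"

definition zariski_closure :: "pt set \<Rightarrow> pt set" where
  "zariski_closure S = \<Inter> {T. zariski_closed T \<and> S \<subseteq> T}"

definition irreducible_closed :: "pt set \<Rightarrow> bool" where
  "irreducible_closed S \<longleftrightarrow> S \<noteq> {} \<and> zariski_closed S \<and>
     (\<forall>A B. zariski_closed A \<longrightarrow> zariski_closed B \<longrightarrow> S \<subseteq> A \<union> B \<longrightarrow> S \<subseteq> A \<or> S \<subseteq> B)"

definition irr_components :: "pt set \<Rightarrow> pt set set" where
  "irr_components X = {Z. Z \<subseteq> X \<and> irreducible_closed Z \<and>
      (\<forall>W. irreducible_closed W \<longrightarrow> Z \<subseteq> W \<longrightarrow> W \<subseteq> X \<longrightarrow> W = Z)}"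

definition vandermonde :: "pt \<Rightarrow> complex" where
  "vandermonde a = det (\<chi> i j. (a $ i) ^ idx j)"

definition I100 :: "pt \<Rightarrow> complex" where
  "I100 a = (\<Prod>i\<in>UNIV. a $ i) ^ 18 * vandermonde a"

definition partial :: "5 \<Rightarrow> (pt \<Rightarrow> complex) \<Rightarrow> pt \<Rightarrow> complex" where
  "partial i f a = deriv (\<lambda>t. f (\<chi> k. if k = i then t else a $ k)) (a $ i)"

text \<open>Affine cone over the singular locus Gamma of E = V(I_100).\<close>
definition Gamma :: "pt set" where
  "Gamma = {a. I100 a = 0 \<and> (\<forall>i. partial i I100 a = 0)}"

definition esym :: "nat \<Rightarrow> pt \<Rightarrow> complex" where
  "esym k a = (\<Sum>S \<in> {S :: 5 set. card S = k}. \<Prod>i\<in>S. a $ i)"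

text \<open>The map Phi, as a map C^5 -> C^5 (coordinates of P(1,2,3,4,5)).\<close>
definition Phi :: "pt \<Rightarrow> pt" where
  "Phi a = (\<chi> k. [esym 4 a ^ 2 - 4 * esym 3 a * esym 5 a,
                   esym 1 a * esym 5 a ^ 3,
                   esym 4 a * esym 5 a ^ 4,
                   esym 2 a * esym 5 a ^ 6,
                   esym 5 a ^ 8] ! idx k)"

text \<open>Domain of definition of Phi on P^4 (in the cone): a \<noteq> 0 and Phi a \<noteq> 0.\<close>
definition Phi_dom :: "pt set" where
  "Phi_dom = {a. a \<noteq> 0 \<and> Phi a \<noteq> 0}"

text \<open>Weighted projective space P(1,2,3,4,5): weight of coordinate k is idx k + 1.\<close>
definition wequiv :: "pt \<Rightarrow> pt \<Rightarrow> bool" where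
  "wequiv y z \<longleftrightarrow> y \<noteq> 0 \<and> (\<exists>l::complex. l \<noteq> 0 \<and> z = (\<chi> k. l ^ (idx k + 1) * y $ k))"

text \<open>Weighted cone over a set of representatives (a subset of P(1,2,3,4,5)).\<close>
definition wcone :: "pt set \<Rightarrow> pt set" where
  "wcone T = {z. \<exists>y\<in>T. wequiv y z}"

definition Qpt :: pt where
  "Qpt = (\<chi> k. if idx k = 0 then 1 else 0)"

text \<open>Sylvester forms with coefficients (a,b,b,c,c) and (a,b,b,b,c).\<close>
definition coeffs :: "complex list \<Rightarrow> pt" where
  "coeffs l = (\<chi> k. l ! idx k)"

text \<open>S_1, S_2 as affine (weighted) cones in C^5 over the closures in P(1,2,3,4,5).\<close>
definition S1 :: "pt set" where
  "S1 = zariski_closure (wcone (Phi ` (Phi_dom \<inter> {coeffs [a, b, b, c, c] | a b c. True})))"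

definition S2 :: "pt set" where
  "S2 = zariski_closure (wcone (Phi ` (Phi_dom \<inter> {coeffs [a, b, b, b, c] | a b c. True})))"

definition hyperplanes :: "pt set set" where
  "hyperplanes = {{a. a $ i = 0} | i. True}"

definition planes2 :: "pt set set" where
  "planes2 = {{a. a $ i = a $ j \<and> a $ k = a $ l} | i j k l. distinct [i, j, k, l]}"

definition planes3 :: "pt set set" where
  "planes3 = {{a. a $ i = a $ j \<and> a $ k = a $ j} | i j k. distinct [i, j, k]}"

end

theory Submission
  imports Defs "HOL-Computational_Algebra.Polynomial"
begin

lemma idx_num: "idx 0 = 0" "idx 1 = 1" "idx 2 = 2" "idx 3 = 3" "idx 4 = 4"
  by (simp_all add: idx_def bit1.Rep_numeral bit1.Rep_0 bit1.Rep_1)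
lemma UNIV5: "(UNIV::5 set) = {0,1,2,3,4}"
proof -
  { fix x :: 5
    obtain z where z: "x = of_int z" "0 \<le> z" "z < 5" using bit1.cases[of x] by auto
    then have "z = 0 \<or> z = 1 \<or> z = 2 \<or> z = 3 \<or> z = 4" by auto
    then have "x \<in> {0,1,2,3,4}" using z by auto }
  then show ?thesis by auto
qed
lemma Rep5: "0 \<le> Rep_bit1 (i::5)" using Rep_bit1[of i] by simp
lemma less5: "(i::5) < j \<longleftrightarrow> idx i < idx j"
  using Rep5[of i] Rep5[of j] by (simp add: idx_def less_bit1_def) arith
lemma idx_inj: "idx i = idx j \<longleftrightarrow> i = j"
  using Rep5[of i] Rep5[of j] by (simp add: idx_def Rep_bit1_inject[symmetric]) arith
lemma "(0::5) < 1" "(1::5)<2" "(3::5) < 4" by (simp_all add: less5 idx_num)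
lemma "(3::5) \<noteq> 4" "(0::5) \<noteq> 4" by simp_all
lemma all5: "(\<forall>i::5. P i) \<longleftrightarrow> P 0 \<and> P 1 \<and> P 2 \<and> P 3 \<and> P 4"
  by (metis UNIV5 UNIV_I empty_iff insert_iff)
lemma ex5: "(\<exists>i::5. P i) \<longleftrightarrow> P 0 \<or> P 1 \<or> P 2 \<or> P 3 \<or> P 4"
  by (metis UNIV5 UNIV_I empty_iff insert_iff)

lemma vand5:
  "det (\<chi> i j. (a$i::complex)^idx j) =
     (a$1-a$0)*(a$2-a$0)*(a$3-a$0)*(a$4-a$0)*(a$2-a$1)*(a$3-a$1)*(a$4-a$1)*(a$3-a$2)*(a$4-a$2)*(a$4-a$3)"
proof -
  have f1: "finite {1::5, 2,3,4}" "0 \<notin> {1::5, 2,3,4}" by auto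
  have f2: "finite {2::5,3,4}" "1 \<notin> {2::5, 3,4}" by auto
  have f3: "finite {3::5,4}" "2 \<notin> {3::5,4}" by auto
  have f4: "finite {4::5}" "3 \<notin> {4::5}" by auto
  show ?thesis
    unfolding det_def UNIV5
    unfolding sum_over_permutations_insert[OF f1]
    unfolding sum_over_permutations_insert[OF f2]
    unfolding sum_over_permutations_insert[OF f3]
    unfolding sum_over_permutations_insert[OF f4]
    unfolding permutes_sing
    apply (simp add: sign_swap_id permutation_swap_id sign_compose permutation_compose swap_id_eq idx_num)
    by algebra
qed

definition Pairs :: "(5 \<times> 5) set" where "Pairs = {(p,q). p < q}"

lemma in5: "(x::5) \<in> {0,1,2,3,4}" using UNIV5 by auto

lemma Pairs_eq: "Pairs = {(0,1),(0,2),(0,3),(0,4),(1,2),(1,3),(1,4),(2,3),(2,4),(3,4)}"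
proof -
  have *: "(p,q) \<in> {(0,1),(0,2),(0,3),(0,4),(1,2),(1,3),(1,4),(2,3),(2,4),(3,4)}" if pq: "p < q" for p q :: 5
      using in5[of p] in5[of q] pq by (elim insertE emptyE) (simp_all add: less5 idx_num)
  have "Pairs \<subseteq> {(0,1),(0,2),(0,3),(0,4),(1,2),(1,3),(1,4),(2,3),(2,4),(3,4)}"
  proof
    fix x assume "x \<in> Pairs"
    then obtain p q where "x = (p,q)" "p < q" unfolding Pairs_def by blast
    then show "x \<in> {(0,1),(0,2),(0,3),(0,4),(1,2),(1,3),(1,4),(2,3),(2,4),(3,4)}" using *[of p q] by simp
  qed
  moreover have "{(0,1),(0,2),(0,3),(0,4),(1,2),(1,3),(1,4),(2,3),(2,4),(3,4)} \<subseteq> Pairs"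
    unfolding Pairs_def by (simp add: less5 idx_num)
  ultimately show ?thesis by (rule subset_antisym)
qed

definition Dv :: "pt \<Rightarrow> complex" where "Dv a = (\<Prod>(p,q)\<in>Pairs. a$q - a$p)"
definition PP :: "pt \<Rightarrow> complex" where "PP a = (\<Prod>i\<in>UNIV. a$i)"

lemma vandermonde_Dv: "vandermonde a = Dv a"
  unfolding vandermonde_def vand5 Dv_def Pairs_eq by (simp add: mult_ac)

definition upd :: "pt \<Rightarrow> 5 \<Rightarrow> complex \<Rightarrow> pt" where
  "upd a i t = (\<chi> k. if k = i then t else a $ k)"

lemma upd_nth[simp]: "upd a i t $ k = (if k = i then t else a $ k)"
  by (simp add: upd_def)
lemma upd_self[simp]: "upd a i (a$i) = a"
  by (simp add: upd_def vec_eq_iff)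

definition dP :: "5 \<Rightarrow> pt \<Rightarrow> complex" where
  "dP i a = (\<Sum>x\<in>UNIV. (if x = i then 1 else 0) * (\<Prod>y\<in>UNIV-{x}. a$y))"
definition cc :: "5 \<Rightarrow> 5\<times>5 \<Rightarrow> complex" where
  "cc i pq = (if snd pq = i then 1 else 0) - (if fst pq = i then 1 else 0)"
definition dD :: "5 \<Rightarrow> pt \<Rightarrow> complex" where
  "dD i a = (\<Sum>pq\<in>Pairs. cc i pq * (\<Prod>pq'\<in>Pairs-{pq}. a$snd pq' - a$fst pq'))"

lemma Dv_alt: "Dv a = (\<Prod>pq\<in>Pairs. a$snd pq - a$fst pq)"
  unfolding Dv_def by (simp add: split_beta)

lemma coord_deriv: "((\<lambda>t. upd a i t $ k) has_field_derivative (if k = i then 1 else 0)) (at z)"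
  by (cases "k = i") (auto intro!: derivative_eq_intros)

lemma PP_deriv: "((\<lambda>t. PP (upd a i t)) has_field_derivative dP i a) (at (a$i))"
proof -
  have "((\<lambda>t. \<Prod>x\<in>UNIV. upd a i t $ x) has_field_derivative
      (\<Sum>x\<in>UNIV. (if x = i then 1 else 0) * (\<Prod>y\<in>UNIV-{x}. upd a i (a$i) $ y))) (at (a$i))"
    by (rule has_field_derivative_prod) (rule coord_deriv)
  then show ?thesis unfolding PP_def dP_def by simp
qed

lemma Dv_deriv: "((\<lambda>t. Dv (upd a i t)) has_field_derivative dD i a) (at (a$i))"
proof -
  have "((\<lambda>t. \<Prod>pq\<in>Pairs. upd a i t $ snd pq - upd a i t $ fst pq) has_field_derivative
      (\<Sum>pq\<in>Pairs. cc i pq * (\<Prod>pq'\<in>Pairs-{pq}. upd a i (a$i) $ snd pq' - upd a i (a$i) $ fst pq'))) (at (a$i))"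
    by (rule has_field_derivative_prod) (unfold cc_def, intro derivative_intros coord_deriv)
  then show ?thesis unfolding Dv_alt dD_def by simp
qed

lemma I100_alt: "I100 a = PP a ^ 18 * Dv a"
  by (simp add: I100_def PP_def vandermonde_Dv)

lemma partial_I100: "partial i I100 a = 18 * PP a ^ 17 * dP i a * Dv a + PP a ^ 18 * dD i a"
proof -
  have "((\<lambda>t. PP (upd a i t) ^ 18 * Dv (upd a i t)) has_field_derivative
     18 * PP a ^ 17 * dP i a * Dv a + PP a ^ 18 * dD i a) (at (a$i))"
    by (rule derivative_eq_intros PP_deriv Dv_deriv refl | simp)+
  then have "deriv (\<lambda>t. I100 (upd a i t)) (a$i) = 18 * PP a ^ 17 * dP i a * Dv a + PP a ^ 18 * dD i a"
    unfolding I100_alt by (intro DERIV_imp_deriv)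
  then show ?thesis unfolding partial_def upd_def by simp
qed

lemma PP_zero: "PP a = 0 \<longleftrightarrow> (\<exists>i. a$i = 0)"
  unfolding PP_def by simp

lemma Dv_zero: "Dv a = 0 \<longleftrightarrow> (\<exists>pq\<in>Pairs. a$fst pq = a$snd pq)"
proof -
  have "Dv a = 0 \<longleftrightarrow> (\<exists>pq\<in>Pairs. a$snd pq - a$fst pq = 0)"
    unfolding Dv_alt by (rule prod_zero_iff) simp
  also have "\<dots> \<longleftrightarrow> (\<exists>pq\<in>Pairs. a$fst pq = a$snd pq)"
    by (rule bex_cong) auto
  finally show ?thesis .
qed

lemma dD_zero2:
  assumes "pq1 \<in> Pairs" "pq2 \<in> Pairs" "pq1 \<noteq> pq2"
    "a$fst pq1 = a$snd pq1" "a$fst pq2 = a$snd pq2"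
  shows "dD i a = 0"
  unfolding dD_def
proof (rule sum.neutral, rule ballI)
  fix pq assume pq: "pq \<in> Pairs"
  define r where "r = (if pq = pq1 then pq2 else pq1)"
  have r: "r \<in> Pairs - {pq}" "a$fst r = a$snd r"
    using assms unfolding r_def by auto
  have "(\<Prod>pq'\<in>Pairs-{pq}. a$snd pq' - a$fst pq') = 0"
    using r by (intro prod_zero) (simp, rule bexI[of _ r], auto)
  then show "cc i pq * (\<Prod>pq'\<in>Pairs-{pq}. a$snd pq' - a$fst pq') = 0" by simp
qed

lemma dD_one:
  assumes "pq0 \<in> Pairs" "a$fst pq0 = a$snd pq0"
    and only: "\<And>pq. pq \<in> Pairs \<Longrightarrow> pq \<noteq> pq0 \<Longrightarrow> a$fst pq \<noteq> a$snd pq"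
  shows "dD (snd pq0) a \<noteq> 0"
proof -
  have z: "(\<Prod>pq'\<in>Pairs-{pq}. a$snd pq' - a$fst pq') = 0" if "pq \<in> Pairs - {pq0}" for pq
    using that assms by (intro prod_zero) (simp, rule bexI[of _ pq0], auto)
  have nz1: "a$snd pq' - a$fst pq' \<noteq> 0" if "pq' \<in> Pairs-{pq0}" for pq'
    using only[of pq'] that by auto
  have nz: "(\<Prod>pq'\<in>Pairs-{pq0}. a$snd pq' - a$fst pq') \<noteq> 0"
    using nz1 by (subst prod_zero_iff) auto
  have ne: "fst pq0 \<noteq> snd pq0" using assms(1) by (auto simp: Pairs_def)
  have "dD (snd pq0) a = cc (snd pq0) pq0 * (\<Prod>pq'\<in>Pairs-{pq0}. a$snd pq' - a$fst pq')
        + (\<Sum>pq\<in>Pairs-{pq0}. cc (snd pq0) pq * (\<Prod>pq'\<in>Pairs-{pq}. a$snd pq' - a$fst pq'))"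
    unfolding dD_def using assms(1) by (simp add: sum.remove)
  also have "(\<Sum>pq\<in>Pairs-{pq0}. cc (snd pq0) pq * (\<Prod>pq'\<in>Pairs-{pq}. a$snd pq' - a$fst pq')) = 0"
    using z by (intro sum.neutral) auto
  finally show ?thesis using nz ne by (simp add: cc_def)
qed

definition twovan :: "pt \<Rightarrow> bool" where
  "twovan a \<longleftrightarrow> (\<exists>pq1\<in>Pairs. \<exists>pq2\<in>Pairs. pq1 \<noteq> pq2 \<and> a$fst pq1 = a$snd pq1 \<and> a$fst pq2 = a$snd pq2)"

lemma Gamma_char: "a \<in> Gamma \<longleftrightarrow> (\<exists>i. a$i = 0) \<or> twovan a"
proof
  assume "a \<in> Gamma"
  then have I: "I100 a = 0" and P: "\<And>i. partial i I100 a = 0" by (auto simp: Gamma_def)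
  show "(\<exists>i. a$i = 0) \<or> twovan a"
  proof (rule ccontr)
    assume "\<not> ?thesis"
    then have n0: "PP a \<noteq> 0" and ntv: "\<not> twovan a" by (auto simp: PP_zero)
    then have "Dv a = 0" using I by (simp add: I100_alt)
    then obtain pq0 where pq0: "pq0 \<in> Pairs" "a$fst pq0 = a$snd pq0" by (auto simp: Dv_zero)
    have only: "\<And>pq. pq \<in> Pairs \<Longrightarrow> pq \<noteq> pq0 \<Longrightarrow> a$fst pq \<noteq> a$snd pq"
      using ntv pq0 unfolding twovan_def by blast
    have "dD (snd pq0) a \<noteq> 0" by (rule dD_one[OF pq0 only])
    then have "partial (snd pq0) I100 a \<noteq> 0"
      using n0 \<open>Dv a = 0\<close> by (simp add: partial_I100)
    then show False using P by blast
  qed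
next
  assume "(\<exists>i. a$i = 0) \<or> twovan a"
  then show "a \<in> Gamma"
  proof
    assume "\<exists>i. a$i = 0"
    then have "PP a = 0" by (simp add: PP_zero)
    then show ?thesis by (simp add: Gamma_def partial_I100 I100_alt)
  next
    assume "twovan a"
    then obtain pq1 pq2 where h: "pq1 \<in> Pairs" "pq2 \<in> Pairs" "pq1 \<noteq> pq2"
      "a$fst pq1 = a$snd pq1" "a$fst pq2 = a$snd pq2" unfolding twovan_def by blast
    then have "Dv a = 0" by (auto simp: Dv_zero)
    moreover have "\<And>i. dD i a = 0" using dD_zero2[OF h] .
    ultimately show ?thesis by (simp add: Gamma_def partial_I100 I100_alt)
  qed
qed

lemma mm_Pairs: "i \<noteq> (j::5) \<Longrightarrow> (min i j, max i j) \<in> Pairs"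
  by (auto simp: Pairs_def min_def max_def)

lemma twovan_planes: "twovan a \<longleftrightarrow> (\<exists>P\<in>planes2 \<union> planes3. a \<in> P)"
proof
  assume "twovan a"
  then obtain p1 q1 p2 q2 where h: "p1 < q1" "p2 < q2" "(p1,q1) \<noteq> (p2,q2)"
      "a$p1 = a$q1" "a$p2 = a$q2"
    unfolding twovan_def Pairs_def by auto
  show "\<exists>P\<in>planes2 \<union> planes3. a \<in> P"
  proof (cases "p1 = p2")
    case True
    then have "{x. x$q1 = x$p1 \<and> x$q2 = x$p1} \<in> planes3" unfolding planes3_def
      using h by (intro CollectI exI[of _ q1] exI[of _ p1] exI[of _ q2]) auto
    then show ?thesis using h True by (intro bexI[of _ "{x. x$q1 = x$p1 \<and> x$q2 = x$p1}"]) auto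
  next
    case np: False
    show ?thesis
    proof (cases "p1 = q2")
      case True
      then have "{x. x$q1 = x$p1 \<and> x$p2 = x$p1} \<in> planes3" unfolding planes3_def
        using h by (intro CollectI exI[of _ q1] exI[of _ p1] exI[of _ p2]) auto
      then show ?thesis using h True by (intro bexI[of _ "{x. x$q1 = x$p1 \<and> x$p2 = x$p1}"]) auto
    next
      case npq: False
      show ?thesis
      proof (cases "q1 = p2")
        case True
        then have "{x. x$p1 = x$q1 \<and> x$q2 = x$q1} \<in> planes3" unfolding planes3_def
          using h by (intro CollectI exI[of _ p1] exI[of _ q1] exI[of _ q2]) auto
        then show ?thesis using h True by (intro bexI[of _ "{x. x$p1 = x$q1 \<and> x$q2 = x$q1}"]) auto
      next
        case nqp: False
        show ?thesis
        proof (cases "q1 = q2")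
          case True
          then have "{x. x$p1 = x$q1 \<and> x$p2 = x$q1} \<in> planes3" unfolding planes3_def
            using h np by (intro CollectI exI[of _ p1] exI[of _ q1] exI[of _ p2]) auto
          then show ?thesis using h True by (intro bexI[of _ "{x. x$p1 = x$q1 \<and> x$p2 = x$q1}"]) auto
        next
          case False
          then have "{x. x$p1 = x$q1 \<and> x$p2 = x$q2} \<in> planes2" unfolding planes2_def
            using h np npq nqp by (intro CollectI exI[of _ p1] exI[of _ q1] exI[of _ p2] exI[of _ q2]) auto
          then show ?thesis using h by (intro bexI[of _ "{x. x$p1 = x$q1 \<and> x$p2 = x$q2}"]) auto
        qed
      qed
    qed
  qed
next
  assume "\<exists>P\<in>planes2 \<union> planes3. a \<in> P"
  then obtain P where P: "P \<in> planes2 \<union> planes3" "a \<in> P" by blast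
  show "twovan a"
  proof (cases "P \<in> planes2")
    case True
    then obtain i j k l where d: "distinct [i,j,k,l]" and Pe: "P = {a. a $ i = a $ j \<and> a $ k = a $ l}"
      unfolding planes2_def by blast
    show ?thesis unfolding twovan_def
      apply (rule bexI[OF _ mm_Pairs[of i j]], rule bexI[OF _ mm_Pairs[of k l]])
      using d P(2) Pe by (auto simp: min_def max_def)
  next
    case False
    then have "P \<in> planes3" using P by blast
    then obtain i j k where d: "distinct [i,j,k]" and Pe: "P = {a. a $ i = a $ j \<and> a $ k = a $ j}"
      unfolding planes3_def by blast
    show ?thesis unfolding twovan_def
      apply (rule bexI[OF _ mm_Pairs[of i j]], rule bexI[OF _ mm_Pairs[of k j]])
      using d P(2) Pe by (auto simp: min_def max_def)
  qed
qed

lemma Gamma_union: "Gamma = \<Union>(hyperplanes \<union> planes2 \<union> planes3)"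
proof -
  have "a \<in> Gamma \<longleftrightarrow> a \<in> \<Union>(hyperplanes \<union> planes2 \<union> planes3)" for a
    unfolding Gamma_char twovan_planes by (auto simp: hyperplanes_def)
  then show ?thesis by blast
qed

definition line :: "pt \<Rightarrow> pt \<Rightarrow> complex \<Rightarrow> pt" where
  "line p q t = (\<chi> k. p$k + t * (q$k - p$k))"

lemma line0: "line p q 0 = p" by (simp add: line_def vec_eq_iff)
lemma line1: "line p q 1 = q" by (simp add: line_def vec_eq_iff)

lemma polyfun_line:
  assumes "f \<in> polyfun" shows "\<exists>P. \<forall>t. f (line p q t) = poly P t"
  using assms
proof induction
  case (pf_const c) show ?case by (rule exI[of _ "[:c:]"]) simp
next
  case (pf_coord i) show ?case
    by (rule exI[of _ "[:p$i, q$i - p$i:]"]) (simp add: line_def algebra_simps)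
next
  case (pf_add f g)
  then obtain P Q where "\<forall>t. f (line p q t) = poly P t" "\<forall>t. g (line p q t) = poly Q t" by blast
  then show ?case by (intro exI[of _ "P + Q"]) simp
next
  case (pf_mult f g)
  then obtain P Q where "\<forall>t. f (line p q t) = poly P t" "\<forall>t. g (line p q t) = poly Q t" by blast
  then show ?case by (intro exI[of _ "P * Q"]) simp
qed

lemma irreducible_lin:
  assumes ne: "L \<noteq> {}" and cl: "zariski_closed L"
    and lc: "\<And>p q t. p \<in> L \<Longrightarrow> q \<in> L \<Longrightarrow> line p q t \<in> L"
  shows "irreducible_closed L"
  unfolding irreducible_closed_def
proof (intro conjI ne cl allI impI)
  fix A B assume A: "zariski_closed A" and B: "zariski_closed B" and sub: "L \<subseteq> A \<union> B"
  show "L \<subseteq> A \<or> L \<subseteq> B"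
  proof (rule ccontr)
    assume "\<not> (L \<subseteq> A \<or> L \<subseteq> B)"
    then obtain p q where p: "p \<in> L" "p \<notin> A" and q: "q \<in> L" "q \<notin> B" by blast
    obtain FA where FA: "FA \<subseteq> polyfun" "A = {x. \<forall>f\<in>FA. f x = 0}" using A zariski_closed_def by blast
    obtain FB where FB: "FB \<subseteq> polyfun" "B = {x. \<forall>f\<in>FB. f x = 0}" using B zariski_closed_def by blast
    obtain f where f: "f \<in> FA" "f p \<noteq> 0" using p FA by blast
    obtain g where g: "g \<in> FB" "g q \<noteq> 0" using q FB by blast
    obtain P where P: "\<forall>t. f (line p q t) = poly P t" using polyfun_line f FA by blast
    obtain Q where Q: "\<forall>t. g (line p q t) = poly Q t" using polyfun_line g FB by blast
    have "\<forall>t. poly (P * Q) t = 0"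
    proof
      fix t
      have "line p q t \<in> A \<union> B" using lc[OF p(1) q(1)] sub by blast
      then have "f (line p q t) = 0 \<or> g (line p q t) = 0" using FA FB f g by blast
      then show "poly (P * Q) t = 0" using P Q by auto
    qed
    then have "P * Q = 0" using poly_all_0_iff_0 by blast
    then have "P = 0 \<or> Q = 0" by simp
    then show False
    proof
      assume "P = 0" then have "f (line p q 0) = 0" using P by simp
      then show False using f line0 by simp
    next
      assume "Q = 0" then have "g (line p q 1) = 0" using Q by simp
      then show False using g line1 by simp
    qed
  qed
qed

lemma closed_Un:
  assumes "zariski_closed A" "zariski_closed B" shows "zariski_closed (A \<union> B)"
proof -
  obtain FA where FA: "FA \<subseteq> polyfun" "A = {x. \<forall>f\<in>FA. f x = 0}" using assms zariski_closed_def by blast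
  obtain FB where FB: "FB \<subseteq> polyfun" "B = {x. \<forall>f\<in>FB. f x = 0}" using assms zariski_closed_def by blast
  let ?F = "{(\<lambda>x. f x * g x) | f g. f \<in> FA \<and> g \<in> FB}"
  have "?F \<subseteq> polyfun" using FA FB by (auto intro: polyfun.pf_mult)
  moreover have "A \<union> B = {x. \<forall>h\<in>?F. h x = 0}"
  proof (rule set_eqI, rule iffI)
    fix x assume "x \<in> A \<union> B" then show "x \<in> {x. \<forall>h\<in>?F. h x = 0}" using FA FB by auto
  next
    fix x assume x: "x \<in> {x. \<forall>h\<in>?F. h x = 0}"
    show "x \<in> A \<union> B"
    proof (rule ccontr)
      assume "x \<notin> A \<union> B"
      then obtain f g where "f \<in> FA" "f x \<noteq> 0" "g \<in> FB" "g x \<noteq> 0" using FA FB by blast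
      then have m: "(\<lambda>x. f x * g x) \<in> ?F" by blast
      have "\<forall>h\<in>?F. h x = 0" using x by simp
      then have "(\<lambda>x. f x * g x) x = 0" using m by (rule bspec)
      then have "f x * g x = 0" by simp
      then show False using \<open>f x \<noteq> 0\<close> \<open>g x \<noteq> 0\<close> by simp
    qed
  qed
  ultimately show ?thesis unfolding zariski_closed_def by blast
qed

lemma closed_empty: "zariski_closed {}"
  unfolding zariski_closed_def
  by (rule exI[of _ "{\<lambda>_. 1}"]) (auto intro: polyfun.pf_const)

lemma closed_Union:
  assumes "finite C" "\<And>Z. Z \<in> C \<Longrightarrow> zariski_closed Z" shows "zariski_closed (\<Union>C)"
  using assms by (induction C rule: finite_induct) (auto intro: closed_Un closed_empty)

lemma irr_in_union:
  assumes "finite C" "\<And>Z. Z \<in> C \<Longrightarrow> zariski_closed Z" "irreducible_closed W" "W \<subseteq> \<Union>C"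
  shows "\<exists>Z\<in>C. W \<subseteq> Z"
  using assms
proof (induction C rule: finite_induct)
  case empty then show ?case by (auto simp: irreducible_closed_def)
next
  case (insert Z0 C)
  have "zariski_closed (\<Union>C)" using insert by (intro closed_Union) auto
  moreover have "W \<subseteq> Z0 \<union> \<Union>C" using insert by auto
  ultimately have "W \<subseteq> Z0 \<or> W \<subseteq> \<Union>C"
    using insert(5) insert(4) unfolding irreducible_closed_def by blast
  then show ?case using insert by blast
qed

lemma components_eq:
  assumes fin: "finite C" and irr: "\<And>Z. Z \<in> C \<Longrightarrow> irreducible_closed Z"
    and anti: "\<And>Z W. Z \<in> C \<Longrightarrow> W \<in> C \<Longrightarrow> Z \<subseteq> W \<Longrightarrow> Z = W"
  shows "irr_components (\<Union>C) = C"
proof -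
  have cl: "\<And>Z. Z \<in> C \<Longrightarrow> zariski_closed Z" using irr irreducible_closed_def by blast
  show ?thesis
  proof
    show "irr_components (\<Union>C) \<subseteq> C"
    proof
      fix Z assume Z: "Z \<in> irr_components (\<Union>C)"
      then have "Z \<subseteq> \<Union>C" "irreducible_closed Z" by (auto simp: irr_components_def)
      then obtain Z' where Z': "Z' \<in> C" "Z \<subseteq> Z'" using irr_in_union[OF fin cl] by blast
      then have "Z' = Z" using Z irr[OF Z'(1)] unfolding irr_components_def by blast
      then show "Z \<in> C" using Z' by simp
    qed
  next
    show "C \<subseteq> irr_components (\<Union>C)"
    proof
      fix Z assume Z: "Z \<in> C"
      { fix W assume W: "irreducible_closed W" "Z \<subseteq> W" "W \<subseteq> \<Union>C"
        then obtain Z' where Z': "Z' \<in> C" "W \<subseteq> Z'" using irr_in_union[OF fin cl] by blast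
        then have "Z = Z'" using anti[OF Z Z'(1)] W by blast
        then have "W = Z" using W Z' by blast }
      then show "Z \<in> irr_components (\<Union>C)" using Z irr unfolding irr_components_def by blast
    qed
  qed
qed

definition hyp :: "5 \<Rightarrow> pt set" where "hyp i = {a. a$i = 0}"
definition pl2 :: "5 \<Rightarrow> 5 \<Rightarrow> 5 \<Rightarrow> 5 \<Rightarrow> pt set" where "pl2 i j k l = {a. a$i = a$j \<and> a$k = a$l}"
definition pl3 :: "5 \<Rightarrow> 5 \<Rightarrow> 5 \<Rightarrow> pt set" where "pl3 i j k = {a. a$i = a$j \<and> a$k = a$j}"

lemma hyperplanes_eq: "hyperplanes = range hyp"
  unfolding hyperplanes_def hyp_def by blast
lemma planes2_eq: "planes2 = {pl2 i j k l | i j k l. distinct [i,j,k,l]}"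
  unfolding planes2_def pl2_def by blast
lemma planes3_eq: "planes3 = {pl3 i j k | i j k. distinct [i,j,k]}"
  unfolding planes3_def pl3_def by blast

lemma pf_diff: "(\<lambda>x. x$i - x$j) \<in> polyfun"
proof -
  have "(\<lambda>x. x$i + (-1) * x$j) \<in> polyfun"
    using polyfun.pf_add[OF polyfun.pf_coord polyfun.pf_mult[OF polyfun.pf_const polyfun.pf_coord]] .
  then show ?thesis by simp
qed

lemma line_nth: "line p q t $ k = p$k + t * (q$k - p$k)" by (simp add: line_def)

lemma irr_hyp: "irreducible_closed (hyp i)"
proof (rule irreducible_lin)
  have "0 \<in> hyp i" by (simp add: hyp_def)
  then show "hyp i \<noteq> {}" by blast
  show "zariski_closed (hyp i)" unfolding zariski_closed_def hyp_def
    by (rule exI[of _ "{\<lambda>x. x$i}"]) (auto intro: polyfun.pf_coord)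
  show "line p q t \<in> hyp i" if "p \<in> hyp i" "q \<in> hyp i" for p q t
    using that by (simp add: hyp_def line_nth)
qed

lemma irr_pl2: "irreducible_closed (pl2 i j k l)"
proof (rule irreducible_lin)
  have "0 \<in> pl2 i j k l" by (simp add: pl2_def)
  then show "pl2 i j k l \<noteq> {}" by blast
  show "zariski_closed (pl2 i j k l)" unfolding zariski_closed_def pl2_def
    by (rule exI[of _ "{\<lambda>x. x$i - x$j, \<lambda>x. x$k - x$l}"]) (auto intro: pf_diff)
  show "line p q t \<in> pl2 i j k l" if "p \<in> pl2 i j k l" "q \<in> pl2 i j k l" for p q t
    using that by (simp add: pl2_def line_nth)
qed

lemma irr_pl3: "irreducible_closed (pl3 i j k)"
proof (rule irreducible_lin)
  have "0 \<in> pl3 i j k" by (simp add: pl3_def)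
  then show "pl3 i j k \<noteq> {}" by blast
  show "zariski_closed (pl3 i j k)" unfolding zariski_closed_def pl3_def
    by (rule exI[of _ "{\<lambda>x. x$i - x$j, \<lambda>x. x$k - x$j}"]) (auto intro: pf_diff)
  show "line p q t \<in> pl3 i j k" if "p \<in> pl3 i j k" "q \<in> pl3 i j k" for p q t
    using that by (simp add: pl3_def line_nth)
qed

lemma idx_lt: "idx (x::5) < 5"
  using in5[of x] by (auto simp: idx_num)

definition val :: "5 \<Rightarrow> complex" where "val x = of_nat (idx x) + 1"
lemma val_inj: "val x = val y \<longleftrightarrow> x = y"
  unfolding val_def by (metis add_right_cancel idx_inj of_nat_eq_iff)
lemma val_ne: "val x \<noteq> 0" "val x \<noteq> 10" "val x \<noteq> 20"
proof -
  have h: "idx x < 5" by (rule idx_lt)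
  have "Re (val x) = real (idx x) + 1" by (simp add: val_def)
  then show "val x \<noteq> 0" "val x \<noteq> 10" "val x \<noteq> 20" using h by (auto)
qed

definition gh :: "5 \<Rightarrow> pt" where "gh i = (\<chi> x. if x = i then 0 else val x)"
definition g2 :: "5 \<Rightarrow> 5 \<Rightarrow> 5 \<Rightarrow> 5 \<Rightarrow> pt" where
  "g2 i j k l = (\<chi> x. if x = i \<or> x = j then 10 else if x = k \<or> x = l then 20 else val x)"
definition g3 :: "5 \<Rightarrow> 5 \<Rightarrow> 5 \<Rightarrow> pt" where
  "g3 i j k = (\<chi> x. if x = i \<or> x = j \<or> x = k then 10 else val x)"

lemma gh_in: "gh i \<in> hyp i" by (simp add: gh_def hyp_def)
lemma g2_in: "distinct [i,j,k,l] \<Longrightarrow> g2 i j k l \<in> pl2 i j k l" by (auto simp: g2_def pl2_def)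
lemma g3_in: "g3 i j k \<in> pl3 i j k" by (simp add: g3_def pl3_def)

lemma gh_eq: "gh i $ x = gh i $ y \<longleftrightarrow> x = y"
  using val_ne val_inj by (auto simp: gh_def)

lemma g2_eq: assumes d: "distinct [i,j,k,l]"
  shows "g2 i j k l $ x = g2 i j k l $ y \<longleftrightarrow>
   x = y \<or> (x \<in> {i,j} \<and> y \<in> {i,j}) \<or> (x \<in> {k,l} \<and> y \<in> {k,l})"
  using d val_ne val_inj unfolding g2_def by (auto split: if_splits)

lemma g3_eq: "g3 i j k $ x = g3 i j k $ y \<longleftrightarrow> x = y \<or> (x \<in> {i,j,k} \<and> y \<in> {i,j,k})"
  using val_ne val_inj by (auto simp: g3_def)

lemma sub_g: "A \<subseteq> B \<Longrightarrow> g \<in> A \<Longrightarrow> g \<in> B" by blast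

lemma hh: "hyp i \<subseteq> hyp i' \<Longrightarrow> i = i'"
  using sub_g[OF _ gh_in, of i "hyp i'"] gh_eq[of i i i'] by (auto simp: hyp_def gh_def)

lemma h2: "hyp i \<subseteq> pl2 i' j' k' l' \<Longrightarrow> i' \<noteq> j' \<Longrightarrow> False"
  using sub_g[OF _ gh_in, of i "pl2 i' j' k' l'"] gh_eq[of i i' j'] by (auto simp: pl2_def)

lemma h3: "hyp i \<subseteq> pl3 i' j' k' \<Longrightarrow> i' \<noteq> j' \<Longrightarrow> False"
  using sub_g[OF _ gh_in, of i "pl3 i' j' k'"] gh_eq[of i i' j'] by (auto simp: pl3_def)

lemma p2h: "pl2 i j k l \<subseteq> hyp i' \<Longrightarrow> distinct [i,j,k,l] \<Longrightarrow> False"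
  using sub_g[OF _ g2_in, of i j k l "hyp i'"] val_ne by (auto simp: hyp_def g2_def split: if_splits)

lemma p3h: "pl3 i j k \<subseteq> hyp i' \<Longrightarrow> False"
  using sub_g[OF _ g3_in, of i j k "hyp i'"] val_ne by (auto simp: hyp_def g3_def split: if_splits)

lemma p22: assumes "pl2 i j k l \<subseteq> pl2 i' j' k' l'" "distinct [i,j,k,l]" "distinct [i',j',k',l']"
  shows "pl2 i j k l = pl2 i' j' k' l'"
proof -
  have "g2 i j k l \<in> pl2 i' j' k' l'" using assms(1) g2_in[OF assms(2)] by blast
  then have e: "g2 i j k l $ i' = g2 i j k l $ j'" "g2 i j k l $ k' = g2 i j k l $ l'" by (auto simp: pl2_def)
  have c1: "(i' = i \<and> j' = j) \<or> (i' = j \<and> j' = i) \<or> (i' = k \<and> j' = l) \<or> (i' = l \<and> j' = k)"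
    using e(1) assms(2,3) unfolding g2_eq[OF assms(2)] by auto
  have c2: "(k' = i \<and> l' = j) \<or> (k' = j \<and> l' = i) \<or> (k' = k \<and> l' = l) \<or> (k' = l \<and> l' = k)"
    using e(2) assms(2,3) unfolding g2_eq[OF assms(2)] by auto
  show ?thesis using c1 c2 assms(2,3) unfolding pl2_def by (elim disjE) auto
qed

lemma p23: assumes "pl2 i j k l \<subseteq> pl3 i' j' k'" "distinct [i,j,k,l]" "distinct [i',j',k']"
  shows False
proof -
  have "g2 i j k l \<in> pl3 i' j' k'" using assms(1) g2_in[OF assms(2)] by blast
  then have e: "g2 i j k l $ i' = g2 i j k l $ j'" "g2 i j k l $ k' = g2 i j k l $ j'" by (auto simp: pl3_def)
  show False using e assms(2,3) unfolding g2_eq[OF assms(2)] by auto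
qed

lemma p32: assumes "pl3 i j k \<subseteq> pl2 i' j' k' l'" "distinct [i,j,k]" "distinct [i',j',k',l']"
  shows False
proof -
  have "g3 i j k \<in> pl2 i' j' k' l'" using assms(1) g3_in by blast
  then have e: "g3 i j k $ i' = g3 i j k $ j'" "g3 i j k $ k' = g3 i j k $ l'" by (auto simp: pl2_def)
  then have "i' \<in> {i,j,k}" "j' \<in> {i,j,k}" "k' \<in> {i,j,k}" "l' \<in> {i,j,k}"
    using assms(3) unfolding g3_eq by auto
  then show False using assms(3) by auto
qed

lemma p33: assumes "pl3 i j k \<subseteq> pl3 i' j' k'" "distinct [i,j,k]" "distinct [i',j',k']"
  shows "pl3 i j k = pl3 i' j' k'"
proof -
  have "g3 i j k \<in> pl3 i' j' k'" using assms(1) g3_in by blast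
  then have e: "g3 i j k $ i' = g3 i j k $ j'" "g3 i j k $ k' = g3 i j k $ j'" by (auto simp: pl3_def)
  then have m: "i' \<in> {i,j,k}" "j' \<in> {i,j,k}" "k' \<in> {i,j,k}"
    using assms(3) unfolding g3_eq by auto
  show ?thesis using m assms(2,3) unfolding pl3_def by (elim insertE emptyE) auto
qed

lemma p22_cases: assumes "pl2 i j k l \<subseteq> pl2 i' j' k' l'" "distinct [i,j,k,l]" "distinct [i',j',k',l']"
  shows "((i' = i \<and> j' = j) \<or> (i' = j \<and> j' = i) \<or> (i' = k \<and> j' = l) \<or> (i' = l \<and> j' = k)) \<and>
         ((k' = i \<and> l' = j) \<or> (k' = j \<and> l' = i) \<or> (k' = k \<and> l' = l) \<or> (k' = l \<and> l' = k))"
proof -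
  have "g2 i j k l \<in> pl2 i' j' k' l'" using assms(1) g2_in[OF assms(2)] by blast
  then have e: "g2 i j k l $ i' = g2 i j k l $ j'" "g2 i j k l $ k' = g2 i j k l $ l'" by (auto simp: pl2_def)
  have c1: "(i' = i \<and> j' = j) \<or> (i' = j \<and> j' = i) \<or> (i' = k \<and> j' = l) \<or> (i' = l \<and> j' = k)"
    using e(1) assms(2,3) unfolding g2_eq[OF assms(2)] by auto
  have c2: "(k' = i \<and> l' = j) \<or> (k' = j \<and> l' = i) \<or> (k' = k \<and> l' = l) \<or> (k' = l \<and> l' = k)"
    using e(2) assms(2,3) unfolding g2_eq[OF assms(2)] by auto
  show ?thesis using c1 c2 by blast
qed

lemma p33_mem: assumes "pl3 i j k \<subseteq> pl3 i' j' k'" "distinct [i,j,k]" "distinct [i',j',k']"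
  shows "i' \<in> {i,j,k}" "j' \<in> {i,j,k}" "k' \<in> {i,j,k}"
proof -
  have "g3 i j k \<in> pl3 i' j' k'" using assms(1) g3_in by blast
  then have e: "g3 i j k $ i' = g3 i j k $ j'" "g3 i j k $ k' = g3 i j k $ j'" by (auto simp: pl3_def)
  then show "i' \<in> {i,j,k}" "j' \<in> {i,j,k}" "k' \<in> {i,j,k}"
    using assms(3) unfolding g3_eq by auto
qed

definition CC :: "pt set set" where "CC = hyperplanes \<union> planes2 \<union> planes3"

lemma CC_cases:
  assumes "Z \<in> CC"
  obtains (h) i where "Z = hyp i"
   | (p2) i j k l where "Z = pl2 i j k l" "distinct [i,j,k,l]"
   | (p3) i j k where "Z = pl3 i j k" "distinct [i,j,k]"
  using assms unfolding CC_def hyperplanes_eq planes2_eq planes3_eq by blast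

lemma CC_anti: assumes "Z \<in> CC" "W \<in> CC" "Z \<subseteq> W" shows "Z = W"
  using assms(1)
proof (cases rule: CC_cases)
  case (h i)
  from assms(2) show ?thesis
  proof (cases rule: CC_cases)
    case (h i') then show ?thesis using hh[of i i'] assms(3) \<open>Z = hyp i\<close> by simp
  next
    case (p2 i' j' k' l') then show ?thesis using h2[of i i' j' k' l'] assms(3) \<open>Z = hyp i\<close> by simp
  next
    case (p3 i' j' k') then show ?thesis using h3[of i i' j' k'] assms(3) \<open>Z = hyp i\<close> by simp
  qed
next
  case (p2 i j k l)
  from assms(2) show ?thesis
  proof (cases rule: CC_cases)
    case (h i') then show ?thesis using p2h[of i j k l i'] assms(3) p2 by simp
  next
    case (p2 i' j' k' l') then show ?thesis using p22[of i j k l i' j' k' l'] assms(3) \<open>Z = pl2 i j k l\<close> \<open>distinct [i,j,k,l]\<close> by simp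
  next
    case (p3 i' j' k') then show ?thesis using p23[of i j k l i' j' k'] assms(3) p2 by simp
  qed
next
  case (p3 i j k)
  from assms(2) show ?thesis
  proof (cases rule: CC_cases)
    case (h i') then show ?thesis using p3h[of i j k i'] assms(3) p3 by simp
  next
    case (p2 i' j' k' l') then show ?thesis using p32[of i j k i' j' k' l'] assms(3) p3 by simp
  next
    case (p3 i' j' k') then show ?thesis using p33[of i j k i' j' k'] assms(3) \<open>Z = pl3 i j k\<close> \<open>distinct [i,j,k]\<close> by simp
  qed
qed

lemma finite_CC: "finite CC"
proof -
  have f2: "finite ((\<lambda>(i,j,k,l). pl2 i j k l) ` (UNIV :: (5\<times>5\<times>5\<times>5) set))" by simp
  have f3: "finite ((\<lambda>(i,j,k). pl3 i j k) ` (UNIV :: (5\<times>5\<times>5) set))" by simp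
  have s2: "planes2 \<subseteq> (\<lambda>(i,j,k,l). pl2 i j k l) ` UNIV"
  proof
    fix P assume "P \<in> planes2"
    then obtain i j k l where "P = pl2 i j k l" unfolding planes2_eq by blast
    then show "P \<in> (\<lambda>(i,j,k,l). pl2 i j k l) ` UNIV" by (intro image_eqI[of _ _ "(i,j,k,l)"]) auto
  qed
  have s3: "planes3 \<subseteq> (\<lambda>(i,j,k). pl3 i j k) ` UNIV"
  proof
    fix P assume "P \<in> planes3"
    then obtain i j k where "P = pl3 i j k" unfolding planes3_eq by blast
    then show "P \<in> (\<lambda>(i,j,k). pl3 i j k) ` UNIV" by (intro image_eqI[of _ _ "(i,j,k)"]) auto
  qed
  have "finite planes2" using s2 f2 by (rule finite_subset)
  moreover have "finite planes3" using s3 f3 by (rule finite_subset)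
  moreover have "finite hyperplanes" unfolding hyperplanes_eq by simp
  ultimately show ?thesis unfolding CC_def by simp
qed

lemma irr_CC: "Z \<in> CC \<Longrightarrow> irreducible_closed Z"
  unfolding CC_def hyperplanes_eq planes2_eq planes3_eq
  using irr_hyp irr_pl2 irr_pl3 by blast

lemma Gamma_CC: "Gamma = \<Union>CC" unfolding CC_def by (rule Gamma_union)

theorem components_Gamma: "irr_components Gamma = hyperplanes \<union> planes2 \<union> planes3"
  using components_eq[OF finite_CC irr_CC CC_anti] unfolding Gamma_CC by (simp add: CC_def)

definition Q2 :: "(5\<times>5\<times>5\<times>5) set" where
  "Q2 = {(i,j,k,l). i < j \<and> k < l \<and> i < k \<and> j \<noteq> k \<and> j \<noteq> l}"
definition Q3 :: "(5\<times>5\<times>5) set" where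
  "Q3 = {(i,j,k). i < j \<and> j < k}"

lemma Q2_eq: "Q2 = {(0,1,2,3),(0,1,2,4),(0,1,3,4),(0,2,1,3),(0,2,1,4),(0,2,3,4),(0,3,1,2),(0,3,1,4),(0,3,2,4),(0,4,1,2),(0,4,1,3),(0,4,2,3),(1,2,3,4),(1,3,2,4),(1,4,2,3)}"
  (is "_ = ?R")
proof
  have *: "(i,j,k,l) \<in> ?R" if "i < j" "k < l" "i < k" "j \<noteq> k" "j \<noteq> l" for i j k l :: 5
    using in5[of i] in5[of j] in5[of k] in5[of l] that
    by (elim insertE emptyE) (simp_all add: less5 idx_num)
  show "Q2 \<subseteq> ?R"
  proof
    fix x assume "x \<in> Q2"
    then obtain i j k l where "x = (i,j,k,l)" "i < j" "k < l" "i < k" "j \<noteq> k" "j \<noteq> l"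
      unfolding Q2_def by blast
    then show "x \<in> ?R" using *[of i j k l] by simp
  qed
  show "?R \<subseteq> Q2" unfolding Q2_def by (simp add: less5 idx_num)
qed

lemma Q3_eq: "Q3 = {(0,1,2),(0,1,3),(0,1,4),(0,2,3),(0,2,4),(0,3,4),(1,2,3),(1,2,4),(1,3,4),(2,3,4)}"
  (is "_ = ?R")
proof
  have *: "(i,j,k) \<in> ?R" if "i < j" "j < k" for i j k :: 5
    using in5[of i] in5[of j] in5[of k] that
    by (elim insertE emptyE) (simp_all add: less5 idx_num)
  show "Q3 \<subseteq> ?R"
  proof
    fix x assume "x \<in> Q3"
    then obtain i j k where "x = (i,j,k)" "i < j" "j < k" unfolding Q3_def by blast
    then show "x \<in> ?R" using *[of i j k] by simp
  qed
  show "?R \<subseteq> Q3" unfolding Q3_def by (simp add: less5 idx_num)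
qed

lemma card_Q2: "card Q2 = 15" unfolding Q2_eq by simp
lemma card_Q3: "card Q3 = 10" unfolding Q3_eq by simp

definition f2 :: "5\<times>5\<times>5\<times>5 \<Rightarrow> pt set" where "f2 q = (case q of (i,j,k,l) \<Rightarrow> pl2 i j k l)"
definition f3 :: "5\<times>5\<times>5 \<Rightarrow> pt set" where "f3 q = (case q of (i,j,k) \<Rightarrow> pl3 i j k)"

lemma pl2_sym: "pl2 i j k l = pl2 j i k l" "pl2 i j k l = pl2 i j l k" "pl2 i j k l = pl2 k l i j"
  unfolding pl2_def by auto
lemma pl3_sym: "pl3 i j k = pl3 j i k" "pl3 i j k = pl3 i k j"
  unfolding pl3_def by auto

lemma norm2: assumes "distinct [i,j,k,l]" shows "\<exists>q\<in>Q2. pl2 i j k l = f2 q"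
proof -
  obtain i1 j1 where ij: "i1 < j1" "pl2 i j k l = pl2 i1 j1 k l" "{i1,j1} = {i,j}"
  proof (cases "i < j")
    case True then show ?thesis using that[of i j] by simp
  next
    case False then have "j < i" using assms by auto
    then show ?thesis using that[of j i] pl2_sym(1)[of i j k l] by auto
  qed
  obtain k1 l1 where kl: "k1 < l1" "pl2 i1 j1 k l = pl2 i1 j1 k1 l1" "{k1,l1} = {k,l}"
  proof (cases "k < l")
    case True then show ?thesis using that[of k l] by simp
  next
    case False then have "l < k" using assms by auto
    then show ?thesis using that[of l k] pl2_sym(2)[of i1 j1 k l] by auto
  qed
  have d: "i1 \<noteq> k1" "i1 \<noteq> l1" "j1 \<noteq> k1" "j1 \<noteq> l1"
    using ij(3) kl(3) assms by (auto simp: doubleton_eq_iff)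
  show ?thesis
  proof (cases "i1 < k1")
    case True
    then show ?thesis using ij kl d
      by (intro bexI[of _ "(i1,j1,k1,l1)"]) (auto simp: Q2_def f2_def)
  next
    case False then have "k1 < i1" using d by auto
    then show ?thesis using ij kl d pl2_sym(3)[of i1 j1 k1 l1]
      by (intro bexI[of _ "(k1,l1,i1,j1)"]) (auto simp: Q2_def f2_def)
  qed
qed

lemma norm3: assumes "distinct [i,j,k]" shows "\<exists>q\<in>Q3. pl3 i j k = f3 q"
proof -
  have e: "pl3 i j k = pl3 j i k" "pl3 i j k = pl3 i k j" "pl3 i j k = pl3 j k i"
     "pl3 i j k = pl3 k i j" "pl3 i j k = pl3 k j i"
    unfolding pl3_def by auto
  have ne: "idx i \<noteq> idx j" "idx j \<noteq> idx k" "idx i \<noteq> idx k" using assms by (auto simp: idx_inj)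
  consider "i<j" "j<k" | "i<k" "k<j" | "j<i" "i<k" | "j<k" "k<i" | "k<i" "i<j" | "k<j" "j<i"
    using ne unfolding less5 by linarith
  then show ?thesis
  proof cases
    case 1 then show ?thesis by (intro bexI[of _ "(i,j,k)"]) (auto simp: Q3_def f3_def)
  next
    case 2 then show ?thesis using e by (intro bexI[of _ "(i,k,j)"]) (auto simp: Q3_def f3_def)
  next
    case 3 then show ?thesis using e by (intro bexI[of _ "(j,i,k)"]) (auto simp: Q3_def f3_def)
  next
    case 4 then show ?thesis using e by (intro bexI[of _ "(j,k,i)"]) (auto simp: Q3_def f3_def)
  next
    case 5 then show ?thesis using e by (intro bexI[of _ "(k,i,j)"]) (auto simp: Q3_def f3_def)
  next
    case 6 then show ?thesis using e by (intro bexI[of _ "(k,j,i)"]) (auto simp: Q3_def f3_def)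
  qed
qed

lemma Q2_distinct: "(i,j,k,l) \<in> Q2 \<Longrightarrow> distinct [i,j,k,l]"
  unfolding Q2_def by (auto simp: less5)
lemma Q3_distinct: "(i,j,k) \<in> Q3 \<Longrightarrow> distinct [i,j,k]"
  unfolding Q3_def by (auto simp: less5)

lemma planes2_img: "planes2 = f2 ` Q2"
proof
  show "planes2 \<subseteq> f2 ` Q2"
  proof
    fix P assume "P \<in> planes2"
    then obtain i j k l where "P = pl2 i j k l" "distinct [i,j,k,l]" unfolding planes2_eq by blast
    then show "P \<in> f2 ` Q2" using norm2 by blast
  qed
  show "f2 ` Q2 \<subseteq> planes2"
  proof
    fix P assume "P \<in> f2 ` Q2"
    then obtain i j k l where "(i,j,k,l) \<in> Q2" "P = pl2 i j k l" unfolding f2_def by auto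
    then show "P \<in> planes2" unfolding planes2_eq using Q2_distinct by blast
  qed
qed

lemma planes3_img: "planes3 = f3 ` Q3"
proof
  show "planes3 \<subseteq> f3 ` Q3"
  proof
    fix P assume "P \<in> planes3"
    then obtain i j k where "P = pl3 i j k" "distinct [i,j,k]" unfolding planes3_eq by blast
    then show "P \<in> f3 ` Q3" using norm3 by blast
  qed
  show "f3 ` Q3 \<subseteq> planes3"
  proof
    fix P assume "P \<in> f3 ` Q3"
    then obtain i j k where "(i,j,k) \<in> Q3" "P = pl3 i j k" unfolding f3_def by auto
    then show "P \<in> planes3" unfolding planes3_eq using Q3_distinct by blast
  qed
qed

lemma inj_f2: "inj_on f2 Q2"
proof
  fix q q' assume q: "q \<in> Q2" and q': "q' \<in> Q2" and e: "f2 q = f2 q'"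
  obtain i j k l where qq: "q = (i,j,k,l)" by (cases q) auto
  obtain i' j' k' l' where qq': "q' = (i',j',k',l')" by (cases q') auto
  have d: "distinct [i,j,k,l]" "distinct [i',j',k',l']" using q q' qq qq' Q2_distinct by auto
  have "pl2 i j k l \<subseteq> pl2 i' j' k' l'" using e qq qq' by (simp add: f2_def)
  from p22_cases[OF this d]
  show "q = q'" using q q' qq qq' unfolding Q2_def by (auto simp: less5)
qed

lemma inj_f3: "inj_on f3 Q3"
proof
  fix q q' assume q: "q \<in> Q3" and q': "q' \<in> Q3" and e: "f3 q = f3 q'"
  obtain i j k where qq: "q = (i,j,k)" by (cases q) auto
  obtain i' j' k' where qq': "q' = (i',j',k')" by (cases q') auto
  have d: "distinct [i,j,k]" "distinct [i',j',k']" using q q' qq qq' Q3_distinct by auto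
  have "pl3 i j k \<subseteq> pl3 i' j' k'" using e qq qq' by (simp add: f3_def)
  from p33_mem[OF this d]
  have m: "i' \<in> {i,j,k}" "j' \<in> {i,j,k}" "k' \<in> {i,j,k}" .
  have o: "idx i < idx j" "idx j < idx k" "idx i' < idx j'" "idx j' < idx k'"
    using q q' qq qq' unfolding Q3_def by (auto simp: less5)
  have "idx i' = idx i \<and> idx j' = idx j \<and> idx k' = idx k"
    using m o by auto
  then show "q = q'" using qq qq' by (simp add: idx_inj)
qed

lemma card_hyp: "card hyperplanes = 5"
proof -
  have "inj hyp" by (rule injI) (metis hh order_refl)
  then have "card (range hyp) = CARD(5)" by (simp add: card_image)
  then show ?thesis unfolding hyperplanes_eq by simp
qed

lemma card_planes2: "card planes2 = 15"
  unfolding planes2_img using card_image[OF inj_f2] card_Q2 by simp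
lemma card_planes3: "card planes3 = 10"
  unfolding planes3_img using card_image[OF inj_f3] card_Q3 by simp

lemma disj: "hyperplanes \<inter> planes2 = {}" "hyperplanes \<inter> planes3 = {}" "planes2 \<inter> planes3 = {}"
proof -
  show "hyperplanes \<inter> planes2 = {}"
  proof (rule ccontr)
    assume "hyperplanes \<inter> planes2 \<noteq> {}"
    then obtain i i' j' k' l' where "hyp i = pl2 i' j' k' l'" "distinct [i',j',k',l']"
      unfolding hyperplanes_eq planes2_eq by blast
    then show False using h2[of i i' j' k' l'] by simp
  qed
  show "hyperplanes \<inter> planes3 = {}"
  proof (rule ccontr)
    assume "hyperplanes \<inter> planes3 \<noteq> {}"
    then obtain i i' j' k' where "hyp i = pl3 i' j' k'" "distinct [i',j',k']"
      unfolding hyperplanes_eq planes3_eq by blast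
    then show False using h3[of i i' j' k'] by simp
  qed
  show "planes2 \<inter> planes3 = {}"
  proof (rule ccontr)
    assume "planes2 \<inter> planes3 \<noteq> {}"
    then obtain i j k l i' j' k' where "pl2 i j k l = pl3 i' j' k'" "distinct [i,j,k,l]" "distinct [i',j',k']"
      unfolding planes2_eq planes3_eq by blast
    then show False using p23[of i j k l i' j' k'] by simp
  qed
qed

lemma card30: "card (hyperplanes \<union> planes2 \<union> planes3) = 30"
proof -
  have f: "finite hyperplanes" "finite planes2" "finite planes3"
    using finite_CC unfolding CC_def by auto
  have "card (hyperplanes \<union> planes2) = 20"
    using card_Un_disjoint[OF f(1,2) disj(1)] card_hyp card_planes2 by simp
  moreover have "(hyperplanes \<union> planes2) \<inter> planes3 = {}" using disj by blast
  ultimately show ?thesis using card_Un_disjoint[of "hyperplanes \<union> planes2" planes3] f card_planes3 by simp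
qed

lemma finite_sets5[simp]: "finite (A :: 5 set set)" by simp

lemma UNIV_only: "card (S::5 set) = 5 \<longleftrightarrow> S = UNIV"
proof
  assume "card S = 5"
  then have "card S = card (UNIV::5 set)" by simp
  then show "S = UNIV" using card_subset_eq[of UNIV S] by simp
qed simp

lemma esym5: "esym 5 a = PP a"
proof -
  have "{S :: 5 set. card S = 5} = {UNIV}" using UNIV_only by auto
  then show ?thesis unfolding esym_def PP_def by simp
qed

lemma Phi_nth: "Phi a $ 0 = esym 4 a ^ 2 - 4 * esym 3 a * esym 5 a"
  "Phi a $ 1 = esym 1 a * esym 5 a ^ 3" "Phi a $ 2 = esym 4 a * esym 5 a ^ 4"
  "Phi a $ 3 = esym 2 a * esym 5 a ^ 6" "Phi a $ 4 = esym 5 a ^ 8"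
  by (simp_all add: Phi_def idx_num)

lemma vec5_eq: "(x::pt) = y \<longleftrightarrow> x$0 = y$0 \<and> x$1 = y$1 \<and> x$2 = y$2 \<and> x$3 = y$3 \<and> x$4 = y$4"
  by (simp add: vec_eq_iff all5)

lemma hyp_wequiv: assumes "a \<in> Phi_dom" "a $ i = 0" shows "wequiv Qpt (Phi a)"
proof -
  have e5: "esym 5 a = 0" using assms(2) by (auto simp: esym5 PP_zero)
  have nz: "Phi a \<noteq> 0" using assms(1) by (simp add: Phi_dom_def)
  then have l: "esym 4 a ^ 2 \<noteq> 0" by (simp add: vec5_eq Phi_nth e5)
  show ?thesis unfolding wequiv_def
  proof (intro conjI exI[of _ "esym 4 a ^ 2"])
    show "Qpt \<noteq> 0" by (simp add: vec5_eq Qpt_def idx_num)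
    show "esym 4 a ^ 2 \<noteq> 0" by (rule l)
    show "Phi a = (\<chi> k. (esym 4 a ^ 2) ^ (idx k + 1) * Qpt $ k)"
      by (simp add: vec5_eq Phi_nth e5 Qpt_def idx_num)
  qed
qed

lemma esym4_ex: "esym 4 (\<chi> x. if x = i then 0 else 1) = 1"
proof -
  let ?a = "(\<chi> x. if x = i then (0::complex) else 1) :: pt"
  let ?A = "{S :: 5 set. card S = 4}"
  have c: "card (UNIV - {i} :: 5 set) = 4" by (simp add: card_Diff_singleton)
  have pr: "(\<Prod>x\<in>S. ?a $ x) = (if S = UNIV - {i} then 1 else 0)" if "S \<in> ?A" for S
  proof (cases "i \<in> S")
    case True
    then have "S \<noteq> UNIV - {i}" by auto
    moreover have "(\<Prod>x\<in>S. ?a $ x) = 0" using True by (intro prod_zero) auto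
    ultimately show ?thesis by simp
  next
    case False
    then have "S \<subseteq> UNIV - {i}" by auto
    moreover have "card S = card (UNIV - {i})" using that c by simp
    ultimately have "S = UNIV - {i}" using card_subset_eq[of "UNIV - {i}" S] by simp
    moreover have "(\<Prod>x\<in>S. ?a $ x) = 1" using False by (intro prod.neutral) auto
    ultimately show ?thesis by simp
  qed
  have "esym 4 ?a = (\<Sum>S\<in>?A. if S = UNIV - {i} then 1 else 0)"
    unfolding esym_def using pr by (intro sum.cong) auto
  also have "\<dots> = 1" using c by (simp add: sum.delta)
  finally show ?thesis .
qed

lemma hyp_nonempty: "Phi_dom \<inter> {a. a $ i = 0} \<noteq> {}"
proof -
  let ?a = "(\<chi> x. if x = i then (0::complex) else 1) :: pt"
  have e5: "esym 5 ?a = 0" by (auto simp: esym5 PP_zero intro: exI[of _ i])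
  have p1: "Phi ?a $ 0 = 1" by (simp add: Phi_nth e5 esym4_ex)
  have "Phi ?a \<noteq> 0"
  proof
    assume "Phi ?a = 0"
    then have "Phi ?a $ 0 = 0" by simp
    then show False using p1 by simp
  qed
  moreover have "?a \<noteq> 0"
  proof
    assume "?a = 0"
    then have "?a $ (if i = 0 then 1 else 0) = 0" by simp
    then show False by (auto split: if_splits)
  qed
  ultimately have "?a \<in> Phi_dom \<inter> {a. a $ i = 0}" by (simp add: Phi_dom_def)
  then show ?thesis by blast
qed

theorem hyp_part: "\<forall>H \<in> hyperplanes. Phi ` (Phi_dom \<inter> H) \<noteq> {} \<and>
          (\<forall>a \<in> Phi_dom \<inter> H. wequiv Qpt (Phi a))"
proof
  fix H assume "H \<in> hyperplanes"
  then obtain i where H: "H = {a. a $ i = 0}" unfolding hyperplanes_def by blast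
  show "Phi ` (Phi_dom \<inter> H) \<noteq> {} \<and> (\<forall>a \<in> Phi_dom \<inter> H. wequiv Qpt (Phi a))"
    using hyp_nonempty[of i] hyp_wequiv[of _ i] unfolding H by auto
qed

definition perm :: "pt \<Rightarrow> (5 \<Rightarrow> 5) \<Rightarrow> pt" where "perm a s = (\<chi> t. a $ s t)"

lemma perm_nth[simp]: "perm a s $ t = a $ s t" by (simp add: perm_def)

lemma esym_perm: assumes "bij s" shows "esym k (perm a s) = esym k a"
proof -
  have inj: "inj s" using assms bij_is_inj by blast
  let ?A = "{S :: 5 set. card S = k}"
  have "esym k (perm a s) = (\<Sum>S\<in>?A. \<Prod>x\<in>s ` S. a $ x)"
    unfolding esym_def
    by (intro sum.cong refl) (simp add: prod.reindex[OF inj_on_subset[OF inj subset_UNIV]])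
  also have "\<dots> = (\<Sum>T\<in>(image s) ` ?A. \<Prod>x\<in>T. a $ x)"
  proof (rule sum.reindex[symmetric, unfolded comp_def])
    show "inj_on (image s) ?A" using inj by (simp add: inj_on_def inj_image_eq_iff)
  qed
  also have "(image s) ` ?A = ?A"
  proof
    show "(image s) ` ?A \<subseteq> ?A" using inj by (auto simp: card_image inj_on_subset)
    show "?A \<subseteq> (image s) ` ?A"
    proof
      fix T assume T: "T \<in> ?A"
      have ii: "inj (inv s)" using bij_imp_bij_inv[OF assms] bij_is_inj by blast
      have "T = s ` (inv s ` T)" using assms by (simp add: image_image bij_is_surj surj_f_inv_f)
      moreover have "card (inv s ` T) = k"
        using T card_image[OF inj_on_subset[OF ii subset_UNIV]] by simp
      ultimately show "T \<in> (image s) ` ?A" by blast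
    qed
  qed
  finally show ?thesis unfolding esym_def .
qed

lemma Phi_perm: "bij s \<Longrightarrow> Phi (perm a s) = Phi a"
  unfolding Phi_def by (simp add: esym_perm)

lemma perm_inv: "bij s \<Longrightarrow> perm (perm b (inv s)) s = b"
  by (simp add: vec_eq_iff bij_is_inj inv_f_f)

lemma perm_zero: "surj s \<Longrightarrow> perm a s = 0 \<longleftrightarrow> a = 0"
  by (simp add: vec_eq_iff) (metis surjD)

lemma img_eq:
  assumes b: "bij s" and P: "\<And>a. a \<in> P \<longleftrightarrow> perm a s \<in> P0"
  shows "Phi ` (Phi_dom \<inter> P) = Phi ` (Phi_dom \<inter> P0)"
proof
  have sj: "surj s" using b bij_is_surj by blast
  show "Phi ` (Phi_dom \<inter> P) \<subseteq> Phi ` (Phi_dom \<inter> P0)"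
  proof
    fix y assume "y \<in> Phi ` (Phi_dom \<inter> P)"
    then obtain a where a: "a \<in> Phi_dom" "a \<in> P" "y = Phi a" by blast
    have "perm a s \<in> Phi_dom \<inter> P0" using a P[of a] perm_zero[OF sj, of a] Phi_perm[OF b, of a]
      by (simp add: Phi_dom_def)
    moreover have "y = Phi (perm a s)" using a Phi_perm[OF b] by simp
    ultimately show "y \<in> Phi ` (Phi_dom \<inter> P0)" by blast
  qed
  show "Phi ` (Phi_dom \<inter> P0) \<subseteq> Phi ` (Phi_dom \<inter> P)"
  proof
    fix y assume "y \<in> Phi ` (Phi_dom \<inter> P0)"
    then obtain c where c: "c \<in> Phi_dom" "c \<in> P0" "y = Phi c" by blast
    let ?a = "perm c (inv s)"
    have pa: "perm ?a s = c" by (rule perm_inv[OF b])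
    have "?a \<in> P" using P[of ?a] pa c by simp
    moreover have "?a \<noteq> 0" using c pa perm_zero[OF sj, of ?a] by (auto simp: Phi_dom_def)
    moreover have "Phi ?a = Phi c" using Phi_perm[OF b, of ?a] pa by simp
    ultimately have "?a \<in> Phi_dom \<inter> P" "y = Phi ?a" using c by (auto simp: Phi_dom_def)
    then show "y \<in> Phi ` (Phi_dom \<inter> P)" by blast
  qed
qed

definition sig :: "5 \<Rightarrow> 5 \<Rightarrow> 5 \<Rightarrow> 5 \<Rightarrow> 5 \<Rightarrow> 5 \<Rightarrow> 5" where
  "sig m i j k l t = (if t = 0 then m else if t = 1 then i else if t = 2 then j else if t = 3 then k else l)"

lemma sig_bij: assumes "distinct [m,i,j,k,l]" shows "bij (sig m i j k l)"
proof -
  have "inj (sig m i j k l)"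
  proof (rule injI)
    fix x y assume "sig m i j k l x = sig m i j k l y"
    then show "x = y" using in5[of x] in5[of y] assms
      by (elim insertE emptyE) (simp_all add: sig_def)
  qed
  then show ?thesis by (simp add: bij_def finite_UNIV_inj_surj)
qed

lemma sig_vals[simp]: "sig m i j k l 0 = m" "sig m i j k l 1 = i" "sig m i j k l 2 = j"
  "sig m i j k l 3 = k" "sig m i j k l 4 = l"
  by (simp_all add: sig_def)

lemma exists_other: assumes "card (A::5 set) < 5" shows "\<exists>m. m \<notin> A"
proof (rule ccontr)
  assume "\<not> ?thesis" then have "A = UNIV" by auto
  then show False using assms by simp
qed

lemma coeffs2: "{coeffs [a, b, b, c, c] | a b c. True} = pl2 1 2 3 4"
proof
  show "{coeffs [a, b, b, c, c] | a b c. True} \<subseteq> pl2 1 2 3 4"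
    by (auto simp: coeffs_def pl2_def idx_num)
  show "pl2 1 2 3 4 \<subseteq> {coeffs [a, b, b, c, c] | a b c. True}"
  proof
    fix x assume "x \<in> pl2 1 2 3 4"
    then have "x = coeffs [x$0, x$1, x$1, x$3, x$3]"
      by (simp add: vec5_eq coeffs_def idx_num pl2_def)
    then show "x \<in> {coeffs [a, b, b, c, c] | a b c. True}" by blast
  qed
qed

lemma coeffs3: "{coeffs [a, b, b, b, c] | a b c. True} = pl3 1 2 3"
proof
  show "{coeffs [a, b, b, b, c] | a b c. True} \<subseteq> pl3 1 2 3"
    by (auto simp: coeffs_def pl3_def idx_num)
  show "pl3 1 2 3 \<subseteq> {coeffs [a, b, b, b, c] | a b c. True}"
  proof
    fix x assume "x \<in> pl3 1 2 3"
    then have "x = coeffs [x$0, x$1, x$1, x$1, x$4]"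
      by (simp add: vec5_eq coeffs_def idx_num pl3_def)
    then show "x \<in> {coeffs [a, b, b, b, c] | a b c. True}" by blast
  qed
qed

lemma planes2_part: "\<forall>P \<in> planes2. zariski_closure (wcone (Phi ` (Phi_dom \<inter> P))) = S1"
proof
  fix P assume "P \<in> planes2"
  then obtain i j k l where P: "P = pl2 i j k l" and d: "distinct [i,j,k,l]" unfolding planes2_eq by blast
  have "card (set [i,j,k,l]) < 5" using card_length[of "[i,j,k,l]"] by simp
  then obtain m where m: "m \<notin> set [i,j,k,l]" using exists_other by blast
  have b: "bij (sig m i j k l)" using d m by (intro sig_bij) auto
  have "Phi ` (Phi_dom \<inter> P) = Phi ` (Phi_dom \<inter> pl2 1 2 3 4)"
    by (rule img_eq[OF b]) (simp add: P pl2_def)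
  then show "zariski_closure (wcone (Phi ` (Phi_dom \<inter> P))) = S1"
    unfolding S1_def coeffs2 by simp
qed

lemma planes3_part: "\<forall>P \<in> planes3. zariski_closure (wcone (Phi ` (Phi_dom \<inter> P))) = S2"
proof
  fix P assume "P \<in> planes3"
  then obtain i j k where P: "P = pl3 i j k" and d: "distinct [i,j,k]" unfolding planes3_eq by blast
  have "card (set [i,j,k]) < 5" using card_length[of "[i,j,k]"] by simp
  then obtain m where m: "m \<notin> set [i,j,k]" using exists_other by blast
  have "card (set [m,i,j,k]) < 5" using card_length[of "[m,i,j,k]"] by simp
  then obtain m2 where m2: "m2 \<notin> set [m,i,j,k]" using exists_other by blast
  have b: "bij (sig m i j k m2)" using d m m2 by (intro sig_bij) auto
  have "Phi ` (Phi_dom \<inter> P) = Phi ` (Phi_dom \<inter> pl3 1 2 3)"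
    by (rule img_eq[OF b]) (simp add: P pl3_def)
  then show "zariski_closure (wcone (Phi ` (Phi_dom \<inter> P))) = S2"
    unfolding S2_def coeffs3 by simp
qed

theorem mainTheorem2:
  shows "irr_components Gamma = hyperplanes \<union> planes2 \<union> planes3
    \<and> card (irr_components Gamma) = 30
    \<and> (\<forall>H \<in> hyperplanes. Phi ` (Phi_dom \<inter> H) \<noteq> {} \<and>
          (\<forall>a \<in> Phi_dom \<inter> H. wequiv Qpt (Phi a)))
    \<and> (\<forall>P \<in> planes2. zariski_closure (wcone (Phi ` (Phi_dom \<inter> P))) = S1)
    \<and> (\<forall>P \<in> planes3. zariski_closure (wcone (Phi ` (Phi_dom \<inter> P))) = S2)"
  unfolding components_Gamma
  by (intro conjI refl card30 hyp_part planes2_part planes3_part)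

end
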